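(* $\mathbf{CF_{REG}}=\mathbf{CF}$, where $\mathbf{CF}$ is the family of context-free languages and $\mathbf{CF_{REG}}$ is the family of all languages $L(G,F)$ such that $G=(V,T,P,S)$ is a context-free grammar and $F\subseteq W^*$ is a regular language for some $W\subseteq V$.
   Context: A context-free grammar $G=(V,T,P,S)$ has total alphabet $V$, terminal alphabet $T\subseteq V$, nonterminal alphabet $N=V-T$, finite rule set $P\subseteq N\times V^*$, start symbol $S\in N$; $\phi(G)=\{w\in V^*\mid S\Rightarrow^* w\}$ is its set of sentential forms. For $X\subseteq V$, $\pi_X$ denotes the homomorphism from $V^*$ to $X^*$ with $\pi_X(a)=a$ for $a\in X$ and $\pi_X(a)=\varepsilon$ for $a\in V-X$. For $W\subseteq V$ and $F\subseteq W^*$, set $\phi(G,F)=\{x\in\phi(G)\mid \pi_W(x)\in F\}$ and $L(G,F)=\{\pi_T(y)\mid y\in\phi(G,F),\ \pi_{N-W}(y)=\varepsilon\}$. *)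

theory Defs
  imports Main
begin

definition cfg :: "'s set \<Rightarrow> 's set \<Rightarrow> ('s \<times> 's list) set \<Rightarrow> 's \<Rightarrow> bool" where
  "cfg V T P S \<longleftrightarrow> finite V \<and> T \<subseteq> V \<and> S \<in> V - T \<and> finite P \<and>
     (\<forall>(A, w) \<in> P. A \<in> V - T \<and> set w \<subseteq> V)"

definition derive1 :: "('s \<times> 's list) set \<Rightarrow> 's list \<Rightarrow> 's list \<Rightarrow> bool" where
  "derive1 P u v \<longleftrightarrow> (\<exists>x y A w. (A, w) \<in> P \<and> u = x @ [A] @ y \<and> v = x @ w @ y)"

definition sforms :: "('s \<times> 's list) set \<Rightarrow> 's \<Rightarrow> 's list set" where
  "sforms P S = {w. (derive1 P)\<^sup>*\<^sup>* [S] w}"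

definition proj :: "'s set \<Rightarrow> 's list \<Rightarrow> 's list" where
  "proj X w = filter (\<lambda>a. a \<in> X) w"

definition lang_cfg :: "'s set \<Rightarrow> 's set \<Rightarrow> ('s \<times> 's list) set \<Rightarrow> 's \<Rightarrow> 's list set" where
  "lang_cfg V T P S = {w \<in> sforms P S. set w \<subseteq> T}"

definition phiF :: "('s \<times> 's list) set \<Rightarrow> 's \<Rightarrow> 's set \<Rightarrow> 's list set \<Rightarrow> 's list set" where
  "phiF P S W F = {x \<in> sforms P S. proj W x \<in> F}"

definition LGF :: "'s set \<Rightarrow> 's set \<Rightarrow> ('s \<times> 's list) set \<Rightarrow> 's \<Rightarrow> 's set \<Rightarrow> 's list set \<Rightarrow> 's list set" where
  "LGF V T P S W F = {proj T y | y. y \<in> phiF P S W F \<and> proj ((V - T) - W) y = []}"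

datatype 'a rexp = Zero | One | Atom 'a | Plus "'a rexp" "'a rexp" | Times "'a rexp" "'a rexp" | Star "'a rexp"

definition conc :: "'a list set \<Rightarrow> 'a list set \<Rightarrow> 'a list set" where
  "conc A B = {u @ v | u v. u \<in> A \<and> v \<in> B}"

inductive_set kstar :: "'a list set \<Rightarrow> 'a list set" for A where
  kstar_Nil: "[] \<in> kstar A"
| kstar_app: "u \<in> A \<Longrightarrow> v \<in> kstar A \<Longrightarrow> u @ v \<in> kstar A"

fun rlang :: "'a rexp \<Rightarrow> 'a list set" where
  "rlang Zero = {}"
| "rlang One = {[]}"
| "rlang (Atom a) = {[a]}"
| "rlang (Plus r s) = rlang r \<union> rlang s"
| "rlang (Times r s) = conc (rlang r) (rlang s)"
| "rlang (Star r) = kstar (rlang r)"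

fun atoms :: "'a rexp \<Rightarrow> 'a set" where
  "atoms Zero = {}"
| "atoms One = {}"
| "atoms (Atom a) = {a}"
| "atoms (Plus r s) = atoms r \<union> atoms s"
| "atoms (Times r s) = atoms r \<union> atoms s"
| "atoms (Star r) = atoms r"

text \<open>F is a regular language over the alphabet W (hence F \<subseteq> W^*).\<close>
definition regular_over :: "'s set \<Rightarrow> 's list set \<Rightarrow> bool" where
  "regular_over W F \<longleftrightarrow> (\<exists>r. atoms r \<subseteq> W \<and> rlang r = F)"

text \<open>A language L over 'a is represented by grammars whose symbols have type 'a + nat:
  terminals are (tagged copies of) elements of 'a, and nat supplies an unbounded
  reservoir of further symbols (nonterminals).\<close>

definition CF :: "'a list set set" where
  "CF = {L. \<exists>(V :: ('a + nat) set) T P S. cfg V T P S \<and> T \<subseteq> range Inl \<and>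
             lang_cfg V T P S = map Inl ` L}"

definition CF_REG :: "'a list set set" where
  "CF_REG = {L. \<exists>(V :: ('a + nat) set) T P S W F. cfg V T P S \<and> T \<subseteq> range Inl \<and>
             W \<subseteq> V \<and> regular_over W F \<and> LGF V T P S W F = map Inl ` L}"

end

theory Submission
  imports Defs
begin

inductive der :: "('s \<times> 's list) set \<Rightarrow> 's list \<Rightarrow> 's list \<Rightarrow> bool" for P where
  der_Nil: "der P [] []"
| der_Keep: "der P xs zs \<Longrightarrow> der P (X#xs) (X#zs)"
| der_Rule: "(A,w) \<in> P \<Longrightarrow> der P w u \<Longrightarrow> der P xs v \<Longrightarrow> der P (A#xs) (u@v)"

lemma der_refl: "der P x x"
  by (induction x) (auto intro: der.intros)

lemma der_append: "der P x z1 \<Longrightarrow> der P y z2 \<Longrightarrow> der P (x@y) (z1@z2)"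
proof (induction rule: der.induct)
  case der_Nil then show ?case by simp
next
  case (der_Keep xs zs X) then show ?case by (simp add: der.der_Keep)
next
  case (der_Rule A w u xs v)
  then show ?case using der.der_Rule[of A w P u "xs@y" "v@z2"] by simp
qed

lemma der_ConsE: "der P (X#xs) z \<Longrightarrow> (\<exists>zs. z = X#zs \<and> der P xs zs) \<or> (\<exists>w u v. (X,w)\<in>P \<and> der P w u \<and> der P xs v \<and> z = u@v)"
  by (erule der.cases) auto

lemma der_split: "der P (x@y) z \<Longrightarrow> \<exists>z1 z2. z = z1@z2 \<and> der P x z1 \<and> der P y z2"
proof (induction x arbitrary: z)
  case Nil
  then show ?case by (intro exI[of _ "[]"] exI[of _ z]) (simp add: der.der_Nil)
next
  case (Cons X xs)
  from Cons.prems have "der P (X # (xs@y)) z" by simp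
  from der_ConsE[OF this] show ?case
  proof (elim disjE exE conjE)
    fix zs' assume e: "z = X#zs'" "der P (xs@y) zs'"
    from Cons.IH[OF e(2)] obtain z1 z2 where "zs' = z1@z2" "der P xs z1" "der P y z2" by blast
    then show ?thesis using e by (intro exI[of _ "X#z1"] exI[of _ z2]) (simp add: der.der_Keep)
  next
    fix w u v assume e: "(X,w) \<in> P" "der P w u" "der P (xs@y) v" "z = u@v"
    from Cons.IH[OF e(3)] obtain z1 z2 where "v = z1@z2" "der P xs z1" "der P y z2" by blast
    then show ?thesis using e by (intro exI[of _ "u@z1"] exI[of _ z2]) (simp add: der.der_Rule)
  qed
qed

lemma der_Nil_iff: "der P [] z \<longleftrightarrow> z = []"
  by (auto elim: der.cases intro: der.intros)

lemma derive1_der: "derive1 P x y \<Longrightarrow> der P y z \<Longrightarrow> der P x z"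
proof -
  assume "derive1 P x y" "der P y z"
  then obtain a b A w where r: "(A,w) \<in> P" "x = a@[A]@b" "y = a@w@b" unfolding derive1_def by blast
  with \<open>der P y z\<close> obtain z1 z23 where "z = z1@z23" "der P a z1" "der P (w@b) z23"
    using der_split by blast
  moreover then obtain z2 z3 where "z23 = z2@z3" "der P w z2" "der P b z3" using der_split by blast
  ultimately show ?thesis using r by (auto intro!: der_append der_Rule)
qed

lemma rtc_der: "(derive1 P)\<^sup>*\<^sup>* x y \<Longrightarrow> der P x y"
  by (induction rule: converse_rtranclp_induct) (auto intro: der_refl derive1_der)

lemma derive1_ctx: "derive1 P x y \<Longrightarrow> derive1 P (a@x@b) (a@y@b)"
  unfolding derive1_def by (metis append.assoc)

lemma rtc_ctx: "(derive1 P)\<^sup>*\<^sup>* x y \<Longrightarrow> (derive1 P)\<^sup>*\<^sup>* (a@x@b) (a@y@b)"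
  by (induction rule: rtranclp_induct) (auto intro: derive1_ctx rtranclp.rtrancl_into_rtrancl)

lemma der_rtc: "der P x y \<Longrightarrow> (derive1 P)\<^sup>*\<^sup>* x y"
proof (induction rule: der.induct)
  case der_Nil
  then show ?case by simp
next
  case (der_Keep xs zs X)
  then show ?case using rtc_ctx[of P xs zs "[X]" "[]"] by simp
next
  case (der_Rule A w u xs v)
  have "derive1 P (A#xs) (w@xs)" unfolding derive1_def using der_Rule(1)
    by (metis append_Cons append_Nil)
  moreover have "(derive1 P)\<^sup>*\<^sup>* (w@xs) (u@xs)" using rtc_ctx[OF der_Rule(4), of "[]" xs] by simp
  moreover have "(derive1 P)\<^sup>*\<^sup>* (u@xs) (u@v)" using rtc_ctx[OF der_Rule(5), of u "[]"] by simp
  ultimately show ?case by (meson converse_rtranclp_into_rtranclp rtranclp_trans)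
qed

lemma sforms_der: "sforms P S = {y. der P [S] y}"
  unfolding sforms_def using der_rtc rtc_der by blast

lemma der_V: "der P x y \<Longrightarrow> set x \<subseteq> V \<Longrightarrow> (\<forall>(A,w)\<in>P. set w \<subseteq> V) \<Longrightarrow> set y \<subseteq> V"
proof (induction rule: der.induct)
  case (der_Rule A w u xs v)
  then have "set w \<subseteq> V" by blast
  then show ?case using der_Rule by simp
qed auto

definition lq :: "'s list \<Rightarrow> 's list set \<Rightarrow> 's list set" where
  "lq w L = {v. w @ v \<in> L}"

lemma lq_app: "lq (u@v) L = lq v (lq u L)"
  unfolding lq_def by simp

lemma lq_Nil[simp]: "lq [] L = L"
  unfolding lq_def by simp

lemma kstar_append: "u \<in> kstar A \<Longrightarrow> v \<in> kstar A \<Longrightarrow> u @ v \<in> kstar A"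
  by (induction rule: kstar.induct) (auto intro: kstar.intros)

lemma kstar_split: "x \<in> kstar A \<Longrightarrow> x = w@z \<Longrightarrow>
   (z = [] \<and> w \<in> kstar A) \<or> (\<exists>u v z1 z2. w = u@v \<and> u \<in> kstar A \<and> v@z1 \<in> A \<and> z2 \<in> kstar A \<and> z = z1@z2)"
proof (induction arbitrary: w rule: kstar.induct)
  case kstar_Nil
  then show ?case by (auto intro: kstar.intros)
next
  case (kstar_app a y)
  from kstar_app.prems obtain us where "(a = w@us \<and> us@y = z) \<or> (a@us = w \<and> y = us@z)"
    by (auto simp: append_eq_append_conv2)
  then show ?case
  proof
    assume h: "a = w@us \<and> us@y = z"
    then show ?thesis using kstar_app(1,2)
      by (intro disjI2 exI[of _ "[]"] exI[of _ w] exI[of _ us] exI[of _ y]) (auto intro: kstar.intros)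
  next
    assume h: "a@us = w \<and> y = us@z"
    from kstar_app.IH[of us] h have
      "(z = [] \<and> us \<in> kstar A) \<or> (\<exists>u v z1 z2. us = u@v \<and> u \<in> kstar A \<and> v@z1 \<in> A \<and> z2 \<in> kstar A \<and> z = z1@z2)"
      by blast
    then show ?thesis
    proof
      assume "z = [] \<and> us \<in> kstar A" then show ?thesis using h kstar_app(1) by (auto intro: kstar.intros)
    next
      assume "\<exists>u v z1 z2. us = u@v \<and> u \<in> kstar A \<and> v@z1 \<in> A \<and> z2 \<in> kstar A \<and> z = z1@z2"
      then obtain u v z1 z2 where "us = u@v" "u \<in> kstar A" "v@z1 \<in> A" "z2 \<in> kstar A" "z = z1@z2" by blast
      then show ?thesis using h kstar_app(1)
        by (intro disjI2 exI[of _ "a@u"] exI[of _ v] exI[of _ z1] exI[of _ z2]) (auto intro: kstar.intros)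
    qed
  qed
qed

lemma lq_kstar: "lq w (kstar A) = (\<Union>{conc (lq v A) (kstar A) | u v. w = u@v \<and> u \<in> kstar A}) \<union> (if w \<in> kstar A then {[]} else {})"
proof (intro set_eqI iffI)
  fix z assume "z \<in> lq w (kstar A)"
  then have "w@z \<in> kstar A" unfolding lq_def by simp
  from kstar_split[OF this refl]
  show "z \<in> (\<Union>{conc (lq v A) (kstar A) | u v. w = u@v \<and> u \<in> kstar A}) \<union> (if w \<in> kstar A then {[]} else {})"
  proof (elim disjE exE conjE)
    assume "z = []" "w \<in> kstar A" then show ?thesis by simp
  next
    fix u v z1 z2 assume h: "w = u@v" "u \<in> kstar A" "v@z1 \<in> A" "z2 \<in> kstar A" "z = z1@z2"
    have "z \<in> conc (lq v A) (kstar A)" unfolding conc_def lq_def using h by blast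
    moreover have "conc (lq v A) (kstar A) \<in> {conc (lq v A) (kstar A) | u v. w = u@v \<and> u \<in> kstar A}"
      using h by blast
    ultimately show ?thesis by blast
  qed
next
  fix z assume "z \<in> (\<Union>{conc (lq v A) (kstar A) | u v. w = u@v \<and> u \<in> kstar A}) \<union> (if w \<in> kstar A then {[]} else {})"
  then consider (a) u v where "w = u@v" "u \<in> kstar A" "z \<in> conc (lq v A) (kstar A)" | (b) "w \<in> kstar A" "z = []"
    by (auto split: if_splits)
  then show "z \<in> lq w (kstar A)"
  proof cases
    case a
    then obtain z1 z2 where h: "z = z1@z2" "v@z1 \<in> A" "z2 \<in> kstar A" unfolding conc_def lq_def by blast
    have "(v@z1)@z2 \<in> kstar A" using h kstar_app by blast
    then have "u@((v@z1)@z2) \<in> kstar A" using a(2) kstar_append by blast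
    then show ?thesis using a(1) h(1) unfolding lq_def by simp
  next
    case b then show ?thesis unfolding lq_def by simp
  qed
qed

lemma lq_conc: "lq w (conc A B) = conc (lq w A) B \<union> \<Union>{lq v B | u v. w = u@v \<and> u \<in> A}"
proof (intro set_eqI iffI)
  fix z assume "z \<in> lq w (conc A B)"
  then obtain a b where h: "w@z = a@b" "a \<in> A" "b \<in> B" unfolding lq_def conc_def by blast
  from h(1) obtain us where "(w = a@us \<and> us@z = b) \<or> (w@us = a \<and> z = us@b)"
    unfolding append_eq_append_conv2 by blast
  then show "z \<in> conc (lq w A) B \<union> \<Union>{lq v B | u v. w = u@v \<and> u \<in> A}"
  proof
    assume e: "w = a@us \<and> us@z = b"
    then have "z \<in> lq us B" "lq us B \<in> {lq v B | u v. w = u@v \<and> u \<in> A}" unfolding lq_def using h by blast+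
    then show ?thesis by blast
  next
    assume e: "w@us = a \<and> z = us@b"
    then have "us \<in> lq w A" unfolding lq_def using h by blast
    then have "z \<in> conc (lq w A) B" unfolding conc_def using e h by blast
    then show ?thesis by blast
  qed
next
  fix z assume "z \<in> conc (lq w A) B \<union> \<Union>{lq v B | u v. w = u@v \<and> u \<in> A}"
  then consider (a) z1 z2 where "z = z1@z2" "w@z1 \<in> A" "z2 \<in> B" | (b) u v where "w = u@v" "u \<in> A" "v@z \<in> B"
    unfolding conc_def lq_def by blast
  then show "z \<in> lq w (conc A B)"
  proof cases
    case a
    then have "(w@z1)@z2 \<in> conc A B" unfolding conc_def by blast
    then show ?thesis using a(1) unfolding lq_def by simp
  next
    case b
    then have "u@(v@z) \<in> conc A B" unfolding conc_def by blast
    then show ?thesis using b(1) unfolding lq_def by simp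
  qed
qed

lemma lq_Atom: "lq w {[a]} = (if w = [] then {[a]} else if w = [a] then {[]} else {})"
  unfolding lq_def by (cases w) auto

lemma lq_One: "lq w {[]} = (if w = [] then {[]} else {})"
  unfolding lq_def by auto

lemma finite_lq: "finite (range (\<lambda>w. lq w (rlang r)))"
proof (induction r)
  case Zero
  have "range (\<lambda>w. lq w (rlang Zero)) = {{}}" by (simp add: lq_def)
  then show ?case by (metis finite.emptyI finite.insertI)
next
  case One
  have "range (\<lambda>w. lq w (rlang One)) \<subseteq> {{[]},{}}"
  proof
    fix L assume "L \<in> range (\<lambda>w. lq w (rlang One))"
    then obtain w where "L = lq w {[]}" by auto
    then show "L \<in> {{[]},{}}" by (simp add: lq_One)
  qed
  then show ?case using finite_subset by blast
next
  case (Atom a)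
  have "range (\<lambda>w. lq w (rlang (Atom a))) \<subseteq> {{[a]},{[]},{}}"
  proof
    fix L assume "L \<in> range (\<lambda>w. lq w (rlang (Atom a)))"
    then obtain w where "L = lq w {[a]}" by auto
    then show "L \<in> {{[a]},{[]},{}}" by (simp add: lq_Atom)
  qed
  then show ?case using finite_subset by blast
next
  case (Plus r s)
  let ?f = "\<lambda>(X,Y). X \<union> Y"
  have "range (\<lambda>w. lq w (rlang (Plus r s))) \<subseteq> ?f ` (range (\<lambda>w. lq w (rlang r)) \<times> range (\<lambda>w. lq w (rlang s)))"
  proof
    fix L assume "L \<in> range (\<lambda>w. lq w (rlang (Plus r s)))"
    then obtain w where "L = lq w (rlang r \<union> rlang s)" by auto
    then have L: "L = ?f (lq w (rlang r), lq w (rlang s))" by (simp add: lq_def Collect_disj_eq)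
    show "L \<in> ?f ` (range (\<lambda>w. lq w (rlang r)) \<times> range (\<lambda>w. lq w (rlang s)))"
      unfolding L by (rule imageI) simp
  qed
  moreover have "finite (?f ` (range (\<lambda>w. lq w (rlang r)) \<times> range (\<lambda>w. lq w (rlang s))))"
    using Plus by simp
  ultimately show ?case by (rule finite_subset)
next
  case (Times r s)
  let ?f = "\<lambda>(X,S). conc X (rlang s) \<union> \<Union>S"
  have "range (\<lambda>w. lq w (rlang (Times r s))) \<subseteq> ?f ` (range (\<lambda>w. lq w (rlang r)) \<times> Pow (range (\<lambda>w. lq w (rlang s))))"
  proof
    fix L assume "L \<in> range (\<lambda>w. lq w (rlang (Times r s)))"
    then obtain w where "L = lq w (rlang (Times r s))" by blast
    then have L: "L = ?f (lq w (rlang r), {lq v (rlang s) | u v. w = u@v \<and> u \<in> rlang r})"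
      by (simp add: lq_conc)
    have "{lq v (rlang s) | u v. w = u@v \<and> u \<in> rlang r} \<subseteq> range (\<lambda>w. lq w (rlang s))" by blast
    then have "(lq w (rlang r), {lq v (rlang s) | u v. w = u@v \<and> u \<in> rlang r}) \<in> range (\<lambda>w. lq w (rlang r)) \<times> Pow (range (\<lambda>w. lq w (rlang s)))"
      by simp
    then show "L \<in> ?f ` (range (\<lambda>w. lq w (rlang r)) \<times> Pow (range (\<lambda>w. lq w (rlang s))))"
      unfolding L by (rule imageI)
  qed
  moreover have "finite (?f ` (range (\<lambda>w. lq w (rlang r)) \<times> Pow (range (\<lambda>w. lq w (rlang s)))))"
    using Times by simp
  ultimately show ?case by (rule finite_subset)
next
  case (Star r)
  let ?K = "kstar (rlang r)"
  let ?f = "\<lambda>(S,b). \<Union>((\<lambda>X. conc X ?K) ` S) \<union> (if b then {[]} else {})"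
  have "range (\<lambda>w. lq w (rlang (Star r))) \<subseteq> ?f ` (Pow (range (\<lambda>w. lq w (rlang r))) \<times> UNIV)"
  proof
    fix L assume "L \<in> range (\<lambda>w. lq w (rlang (Star r)))"
    then obtain w where "L = lq w (rlang (Star r))" by blast
    moreover have "{conc (lq v (rlang r)) ?K | u v. w = u@v \<and> u \<in> ?K} = (\<lambda>X. conc X ?K) ` {lq v (rlang r) | u v. w = u@v \<and> u \<in> ?K}"
      by blast
    ultimately have L: "L = ?f ({lq v (rlang r) | u v. w = u@v \<and> u \<in> ?K}, w \<in> ?K)"
      by (simp add: lq_kstar)
    have "{lq v (rlang r) | u v. w = u@v \<and> u \<in> ?K} \<subseteq> range (\<lambda>w. lq w (rlang r))" by blast
    then have "({lq v (rlang r) | u v. w = u@v \<and> u \<in> ?K}, w \<in> ?K) \<in> Pow (range (\<lambda>w. lq w (rlang r))) \<times> UNIV"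
      by simp
    then show "L \<in> ?f ` (Pow (range (\<lambda>w. lq w (rlang r))) \<times> UNIV)"
      unfolding L by (rule imageI)
  qed
  moreover have "finite (?f ` (Pow (range (\<lambda>w. lq w (rlang r))) \<times> (UNIV :: bool set)))"
    using Star by simp
  ultimately show ?case by (rule finite_subset)
qed

type_synonym 's nt = "('s list set \<times> 's \<times> 's list set) option"

fun ischain :: "'q \<Rightarrow> ('q \<times> 's \<times> 'q) list \<Rightarrow> 'q \<Rightarrow> bool" where
  "ischain p [] q = (p = q)"
| "ischain p (t#c) q = (fst t = p \<and> ischain (snd (snd t)) c q)"

definition mids :: "('q \<times> 's \<times> 'q) list \<Rightarrow> 's list" where
  "mids c = map (fst \<circ> snd) c"

definition QS :: "'s list set \<Rightarrow> 's list set set" where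
  "QS F = range (\<lambda>w. lq w F)"

definition stp :: "'s set \<Rightarrow> 's \<Rightarrow> 's list set \<Rightarrow> 's list set" where
  "stp W X p = lq (proj W [X]) p"

abbreviation NT :: "'s list set \<times> 's \<times> 's list set \<Rightarrow> 's + 's nt" where
  "NT t \<equiv> Inr (Some t)"

definition newP :: "'s set \<Rightarrow> 's set \<Rightarrow> ('s \<times> 's list) set \<Rightarrow> 's \<Rightarrow> 's set \<Rightarrow> 's list set \<Rightarrow> (('s + 's nt) \<times> ('s + 's nt) list) set" where
  "newP V T P S W F =
     {(Inr None, [NT (F,S,q)]) | q. q \<in> QS F \<and> [] \<in> q}
   \<union> {(NT (p,A,q), map NT c) | A p q c. (A, mids c) \<in> P \<and> p \<in> QS F \<and> ischain p c q \<and> (\<forall>t\<in>set c. t \<in> QS F \<times> V \<times> QS F)}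
   \<union> {(NT (p,X,stp W X p), [Inl X]) | X p. X \<in> T \<and> p \<in> QS F}
   \<union> {(NT (p,X,stp W X p), []) | X p. X \<in> V - T \<and> X \<in> W \<and> p \<in> QS F}"

definition newV :: "'s set \<Rightarrow> 's set \<Rightarrow> 's list set \<Rightarrow> ('s + 's nt) set" where
  "newV V T F = Inl ` T \<union> {Inr None} \<union> NT ` (QS F \<times> V \<times> QS F)"

lemma lq_QS: "p \<in> QS F \<Longrightarrow> lq w p \<in> QS F"
proof -
  assume "p \<in> QS F"
  then obtain u where "p = lq u F" unfolding QS_def by blast
  then have "lq w p = lq (u@w) F" by (simp add: lq_app)
  then show ?thesis unfolding QS_def by (metis rangeI)
qed

lemma F_QS: "F \<in> QS F"
  unfolding QS_def by (metis lq_Nil rangeI)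

lemma stp_QS: "p \<in> QS F \<Longrightarrow> stp W X p \<in> QS F"
  unfolding stp_def by (rule lq_QS)

lemma ischain_end: "ischain p c q \<Longrightarrow> p \<in> Q \<Longrightarrow> (\<forall>t\<in>set c. snd (snd t) \<in> Q) \<Longrightarrow> q \<in> Q"
  by (induction c arbitrary: p) auto

lemma proj_Cons: "proj W (X#y) = proj W [X] @ proj W y"
  unfolding proj_def by simp

lemma proj_app: "proj W (x@y) = proj W x @ proj W y"
  unfolding proj_def by simp

lemma lhs_Inr: "(a, w) \<in> newP V T P S W F \<Longrightarrow> a \<in> range Inr"
  unfolding newP_def by auto

lemma der_term: "der (newP V T P S W F) [Inl X] u \<Longrightarrow> u = [Inl X]"
proof -
  assume "der (newP V T P S W F) [Inl X] u"
  from der_ConsE[OF this] show ?thesis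
  proof (elim disjE exE conjE)
    fix zs assume "u = Inl X # zs" "der (newP V T P S W F) [] zs"
    then show ?thesis by (simp add: der_Nil_iff)
  next
    fix w u' v assume "(Inl X, w) \<in> newP V T P S W F"
    then have "Inl X \<in> (range Inr :: ('a + 'a nt) set)" by (rule lhs_Inr)
    then show ?thesis by auto
  qed
qed

lemma newP_NT:
  assumes "(NT (p,X,b), w') \<in> newP V T P S W F"
  shows "(\<exists>c1. w' = map NT c1 \<and> (X, mids c1) \<in> P \<and> ischain p c1 b)
     \<or> (b = stp W X p \<and> X \<in> T \<and> w' = [Inl X])
     \<or> (b = stp W X p \<and> X \<in> V - T \<and> X \<in> W \<and> w' = [])"
  using assms unfolding newP_def
proof (elim UnE CollectE exE conjE)
  fix q assume "(NT (p, X, b), w') = (Inr None, [NT (F, S, q)])"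
  then show ?thesis by simp
next
  fix A p' q c assume "(NT (p, X, b), w') = (NT (p', A, q), map NT c)" "(A, mids c) \<in> P" "ischain p' c q"
  then show ?thesis by (intro disjI1 exI[of _ c]) simp
next
  fix Y p' assume "(NT (p, X, b), w') = (NT (p', Y, stp W Y p'), [Inl Y])" "Y \<in> T"
  then show ?thesis by simp
next
  fix Y p' assume "(NT (p, X, b), w') = (NT (p', Y, stp W Y p'), [])" "Y \<in> V - T" "Y \<in> W"
  then show ?thesis by simp
qed

lemma lq_Cons: "lq (proj W (X#y)) p = lq (proj W y) (stp W X p)"
  unfolding stp_def by (metis lq_app proj_Cons)

lemma sound:
  assumes "der P' x' z"
  shows "P' = newP V T P S W F \<Longrightarrow> x' = map NT c \<Longrightarrow> ischain p c q \<Longrightarrow> set z \<subseteq> Inl ` T \<Longrightarrow>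
    \<exists>y. der P (mids c) y \<and> (\<forall>s\<in>set y. s \<in> T \<or> (s \<in> V - T \<and> s \<in> W)) \<and> z = map Inl (proj T y) \<and> lq (proj W y) p = q"
  using assms
proof (induction arbitrary: c p q rule: der.induct)
  case der_Nil
  then have "c = []" "p = q" by auto
  then show ?case by (intro exI[of _ "[]"]) (simp add: mids_def proj_def der.der_Nil)
next
  case (der_Keep xs zs X)
  then show ?case by (cases c) auto
next
  case (der_Rule A' w' u xs' v)
  from der_Rule.prems(2) obtain t c' where c: "c = t#c'" "A' = NT t" "xs' = map NT c'" by (cases c) auto
  obtain a X b where t: "t = (a,X,b)" by (cases t)
  from der_Rule.prems(3) c t have ab: "a = p" "ischain b c' q" by auto
  from der_Rule.prems(4) have uv: "set u \<subseteq> Inl ` T" "set v \<subseteq> Inl ` T" by auto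
  from der_Rule.IH(2)[OF der_Rule.prems(1) c(3) ab(2) uv(2)] obtain y2 where
    y2: "der P (mids c') y2" "\<forall>s\<in>set y2. s \<in> T \<or> (s \<in> V - T \<and> s \<in> W)" "v = map Inl (proj T y2)" "lq (proj W y2) b = q"
    by blast
  have mc: "mids c = X # mids c'" using c t by (simp add: mids_def)
  from der_Rule.hyps(1) der_Rule.prems(1) c(2) t ab(1) have
    "(NT (p,X,b), w') \<in> newP V T P S W F" by simp
  from newP_NT[OF this] show ?case
  proof (elim disjE exE conjE)
    fix c1 assume h: "w' = map NT c1" "(X, mids c1) \<in> P" "ischain p c1 b"
    from der_Rule.IH(1)[OF der_Rule.prems(1) h(1) h(3) uv(1)] obtain y1 where
      y1: "der P (mids c1) y1" "\<forall>s\<in>set y1. s \<in> T \<or> (s \<in> V - T \<and> s \<in> W)" "u = map Inl (proj T y1)" "lq (proj W y1) p = b"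
      by blast
    have d1: "der P (mids c) (y1@y2)" unfolding mc by (rule der.der_Rule[OF h(2) y1(1) y2(1)])
    have d2: "\<forall>s\<in>set (y1@y2). s \<in> T \<or> (s \<in> V - T \<and> s \<in> W)" using y1(2) y2(2) unfolding set_append ball_Un by (rule conjI)
    have d3: "u@v = map Inl (proj T (y1@y2))" using y1(3) y2(3) by (simp add: proj_app)
    have d4: "lq (proj W (y1@y2)) p = q" using y1(4) y2(4) by (simp add: proj_app lq_app)
    show ?thesis by (rule exI[of _ "y1@y2"]) (intro conjI d1 d2 d3 d4)
  next
    assume h: "b = stp W X p" "X \<in> T" "w' = [Inl X]"
    have "der (newP V T P S W F) [Inl X] u" using der_Rule.hyps(2) der_Rule.prems(1) h(3) by simp
    then have u: "u = [Inl X]" by (rule der_term)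
    have d1: "der P (mids c) (X#y2)" unfolding mc by (rule der.der_Keep[OF y2(1)])
    have d2: "\<forall>s\<in>set (X#y2). s \<in> T \<or> (s \<in> V - T \<and> s \<in> W)" using h(2) y2(2) by simp
    have d3: "u@v = map Inl (proj T (X#y2))" using u h(2) y2(3) by (simp add: proj_def)
    have d4: "lq (proj W (X#y2)) p = q" using y2(4) h(1) by (simp add: lq_Cons)
    show ?thesis by (rule exI[of _ "X#y2"]) (intro conjI d1 d2 d3 d4)
  next
    assume h: "b = stp W X p" "X \<in> V - T" "X \<in> W" "w' = []"
    have "der P' [] u" using der_Rule.hyps(2) h(4) by simp
    then have u: "u = []" by (simp add: der_Nil_iff)
    have d1: "der P (mids c) (X#y2)" unfolding mc by (rule der.der_Keep[OF y2(1)])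
    have d2: "\<forall>s\<in>set (X#y2). s \<in> T \<or> (s \<in> V - T \<and> s \<in> W)" using h(2,3) y2(2) by simp
    have d3: "u@v = map Inl (proj T (X#y2))" using u h(2) y2(3) by (simp add: proj_def)
    have d4: "lq (proj W (X#y2)) p = q" using y2(4) h(1) by (simp add: lq_Cons)
    show ?thesis by (rule exI[of _ "X#y2"]) (intro conjI d1 d2 d3 d4)
  qed
qed

lemma newP_R1: "q \<in> QS F \<Longrightarrow> [] \<in> q \<Longrightarrow> (Inr None, [NT (F,S,q)]) \<in> newP V T P S W F"
  unfolding newP_def
  by (rule UnI1, rule UnI1, rule UnI1, rule CollectI, rule exI[of _ q]) simp

lemma newP_R2: "(A, mids c) \<in> P \<Longrightarrow> p \<in> QS F \<Longrightarrow> ischain p c q \<Longrightarrow> \<forall>t\<in>set c. t \<in> QS F \<times> V \<times> QS F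
  \<Longrightarrow> (NT (p,A,q), map NT c) \<in> newP V T P S W F"
  unfolding newP_def
  by (rule UnI1, rule UnI1, rule UnI2, rule CollectI, rule exI[of _ A], rule exI[of _ p], rule exI[of _ q], rule exI[of _ c]) simp

lemma newP_R3: "X \<in> T \<Longrightarrow> p \<in> QS F \<Longrightarrow> (NT (p,X,stp W X p), [Inl X]) \<in> newP V T P S W F"
  unfolding newP_def
  by (rule UnI1, rule UnI2, rule CollectI, rule exI[of _ X], rule exI[of _ p]) simp

lemma newP_R4: "X \<in> V - T \<Longrightarrow> X \<in> W \<Longrightarrow> p \<in> QS F \<Longrightarrow> (NT (p,X,stp W X p), []) \<in> newP V T P S W F"
  unfolding newP_def
  by (rule UnI2, rule CollectI, rule exI[of _ X], rule exI[of _ p]) simp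

lemma complete:
  assumes "der P x y"
  shows "set x \<subseteq> V \<Longrightarrow> cfg V T P S \<Longrightarrow> (\<forall>s\<in>set y. s \<in> T \<or> s \<in> W) \<Longrightarrow> p \<in> QS F \<Longrightarrow>
    \<exists>c. mids c = x \<and> ischain p c (lq (proj W y) p) \<and> (\<forall>t\<in>set c. t \<in> QS F \<times> V \<times> QS F)
       \<and> der (newP V T P S W F) (map NT c) (map Inl (proj T y))"
  using assms
proof (induction arbitrary: p rule: der.induct)
  case der_Nil
  show ?case by (intro exI[of _ "[]"]) (simp add: mids_def proj_def der.der_Nil)
next
  case (der_Keep xs zs X)
  let ?r = "stp W X p"
  have r: "?r \<in> QS F" using der_Keep.prems(4) by (rule stp_QS)
  have xs: "set xs \<subseteq> V" using der_Keep.prems(1) by simp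
  have zs: "\<forall>s\<in>set zs. s \<in> T \<or> s \<in> W" using der_Keep.prems(3) by simp
  from der_Keep.IH[OF xs der_Keep.prems(2) zs r] obtain c' where
    c': "mids c' = xs" "ischain ?r c' (lq (proj W zs) ?r)" "\<forall>t\<in>set c'. t \<in> QS F \<times> V \<times> QS F"
       "der (newP V T P S W F) (map NT c') (map Inl (proj T zs))" by blast
  have X: "X \<in> V" "X \<in> T \<or> X \<in> W" using der_Keep.prems(1,3) by simp_all
  have lqe: "lq (proj W (X#zs)) p = lq (proj W zs) ?r" by (rule lq_Cons)
  have d: "der (newP V T P S W F) (NT (p,X,?r) # map NT c') (map Inl (proj T (X#zs)))"
  proof (cases "X \<in> T")
    case True
    have "(NT (p,X,?r), [Inl X]) \<in> newP V T P S W F" using True der_Keep.prems(4) by (rule newP_R3)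
    from der.der_Rule[OF this der_refl c'(4)] show ?thesis using True by (simp add: proj_def)
  next
    case False
    then have "X \<in> V - T" "X \<in> W" using X by simp_all
    then have "(NT (p,X,?r), []) \<in> newP V T P S W F" using der_Keep.prems(4) by (intro newP_R4)
    from der.der_Rule[OF this der_Nil c'(4)] show ?thesis using False by (simp add: proj_def)
  qed
  have e1: "mids ((p,X,?r)#c') = X#xs" using c'(1) by (simp add: mids_def)
  have e2: "ischain p ((p,X,?r)#c') (lq (proj W (X#zs)) p)" using c'(2) lqe by simp
  have e3: "\<forall>t\<in>set ((p,X,?r)#c'). t \<in> QS F \<times> V \<times> QS F" using c'(3) X(1) r der_Keep.prems(4) by simp
  have e4: "der (newP V T P S W F) (map NT ((p,X,?r)#c')) (map Inl (proj T (X#zs)))" using d by simp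
  show ?case by (rule exI[of _ "(p,X,?r)#c'"]) (intro conjI e1 e2 e3 e4)
next
  case (der_Rule A w u xs v)
  have A: "A \<in> V" "set w \<subseteq> V" "set xs \<subseteq> V"
    using der_Rule.prems(1,2) der_Rule.hyps(1) unfolding cfg_def by auto
  have uv: "\<forall>s\<in>set u. s \<in> T \<or> s \<in> W" "\<forall>s\<in>set v. s \<in> T \<or> s \<in> W"
    using der_Rule.prems(3) by simp_all
  from der_Rule.IH(1)[OF A(2) der_Rule.prems(2) uv(1) der_Rule.prems(4)] obtain c1 where
    c1: "mids c1 = w" "ischain p c1 (lq (proj W u) p)" "\<forall>t\<in>set c1. t \<in> QS F \<times> V \<times> QS F"
       "der (newP V T P S W F) (map NT c1) (map Inl (proj T u))" by blast
  let ?r = "lq (proj W u) p"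
  have r: "?r \<in> QS F" using der_Rule.prems(4) by (rule lq_QS)
  from der_Rule.IH(2)[OF A(3) der_Rule.prems(2) uv(2) r] obtain c2 where
    c2: "mids c2 = xs" "ischain ?r c2 (lq (proj W v) ?r)" "\<forall>t\<in>set c2. t \<in> QS F \<times> V \<times> QS F"
       "der (newP V T P S W F) (map NT c2) (map Inl (proj T v))" by blast
  have "(A, mids c1) \<in> P" using c1(1) der_Rule.hyps(1) by simp
  then have "(NT (p,A,?r), map NT c1) \<in> newP V T P S W F"
    using der_Rule.prems(4) c1(2) c1(3) by (rule newP_R2)
  from der.der_Rule[OF this c1(4) c2(4)]
  have e4: "der (newP V T P S W F) (map NT ((p,A,?r)#c2)) (map Inl (proj T (u@v)))"
    by (simp add: proj_app)
  have e1: "mids ((p,A,?r)#c2) = A#xs" using c2(1) by (simp add: mids_def)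
  have e2: "ischain p ((p,A,?r)#c2) (lq (proj W (u@v)) p)" using c2(2) by (simp add: proj_app lq_app)
  have e3: "\<forall>t\<in>set ((p,A,?r)#c2). t \<in> QS F \<times> V \<times> QS F" using c2(3) A(1) r der_Rule.prems(4) by simp
  show ?case by (rule exI[of _ "(p,A,?r)#c2"]) (intro conjI e1 e2 e3 e4)
qed

lemma ischain_Q: "ischain p c q \<Longrightarrow> p \<in> Q \<Longrightarrow> (\<forall>t\<in>set c. t \<in> Q \<times> V \<times> Q) \<Longrightarrow> q \<in> Q"
  by (induction c arbitrary: p) auto

lemma newP_cases:
  assumes "(A, w) \<in> newP V T P S W F"
  obtains (a) q where "A = Inr None" "w = [NT (F,S,q)]" "q \<in> QS F" "[] \<in> q"
    | (b) p B q c where "A = NT (p,B,q)" "w = map NT c" "(B, mids c) \<in> P" "p \<in> QS F" "ischain p c q" "\<forall>t\<in>set c. t \<in> QS F \<times> V \<times> QS F"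
    | (c) X p where "A = NT (p,X,stp W X p)" "w = [Inl X]" "X \<in> T" "p \<in> QS F"
    | (d) X p where "A = NT (p,X,stp W X p)" "w = []" "X \<in> V - T" "X \<in> W" "p \<in> QS F"
  using assms unfolding newP_def
proof (elim UnE CollectE exE conjE)
  fix q assume "(A, w) = (Inr None, [NT (F, S, q)])" "q \<in> QS F" "[] \<in> q"
  then show thesis using that(1) by simp
next
  fix B p q c assume "(A, w) = (NT (p, B, q), map NT c)" "(B, mids c) \<in> P" "p \<in> QS F" "ischain p c q" "\<forall>t\<in>set c. t \<in> QS F \<times> V \<times> QS F"
  then show thesis using that(2) by simp
next
  fix X p assume "(A, w) = (NT (p, X, stp W X p), [Inl X])" "X \<in> T" "p \<in> QS F"
  then show thesis using that(3) by simp
next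
  fix X p assume "(A, w) = (NT (p, X, stp W X p), [])" "X \<in> V - T" "X \<in> W" "p \<in> QS F"
  then show thesis using that(4) by simp
qed

lemma cfg_new:
  assumes G: "cfg V T P S" and fQ: "finite (QS F)"
  shows "cfg (newV V T F) (Inl ` T) (newP V T P S W F) (Inr None)"
proof -
  have fV: "finite V" "finite P" "T \<subseteq> V" "S \<in> V" using G unfolding cfg_def by auto
  have fT: "finite T" using fV(1,3) by (rule finite_subset[rotated])
  define m where "m = Max ((length \<circ> snd) ` P)"
  define f1 where "f1 = (\<lambda>q. (Inr None :: 'a + 'a nt, [NT (F,S,q)]))"
  define f2 where "f2 = (\<lambda>(p,A,q,c). (NT (p,A,q) :: 'a + 'a nt, map NT c :: ('a + 'a nt) list))"
  define f3 where "f3 = (\<lambda>(X,p). (NT (p,X,stp W X p) :: 'a + 'a nt, [Inl X :: 'a + 'a nt]))"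
  define f4 where "f4 = (\<lambda>(X,p). (NT (p,X,stp W X p) :: 'a + 'a nt, [] :: ('a + 'a nt) list))"
  define D where "D = f1 ` QS F \<union> f2 ` (QS F \<times> V \<times> QS F \<times> {c. set c \<subseteq> QS F \<times> V \<times> QS F \<and> length c \<le> m})
     \<union> f3 ` (T \<times> QS F) \<union> f4 ` (V \<times> QS F)"
  have "finite D" unfolding D_def
    using fQ fV fT finite_lists_length_le[of "QS F \<times> V \<times> QS F" m]
    by (simp add: finite_cartesian_product)
  moreover have "newP V T P S W F \<subseteq> D"
  proof
    fix r assume "r \<in> newP V T P S W F"
    moreover obtain A w where r: "r = (A, w)" by (cases r)
    ultimately have "(A, w) \<in> newP V T P S W F" by simp
    then show "r \<in> D"
    proof (cases rule: newP_cases)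
      case (a q)
      then have "r = f1 q" unfolding f1_def r by simp
      then show ?thesis unfolding D_def using a(3) by blast
    next
      case (b p B q c)
      have "q \<in> QS F" using ischain_Q[OF b(5) b(4) b(6)] .
      moreover have "B \<in> V" using G b(3) unfolding cfg_def by auto
      moreover have "length c \<le> m"
      proof -
        have "(length \<circ> snd) (B, mids c) \<in> (length \<circ> snd) ` P" using b(3) by (rule imageI)
        then have "(length \<circ> snd) (B, mids c) \<le> m" unfolding m_def using fV(2) by (intro Max_ge) auto
        then show ?thesis by (simp add: mids_def)
      qed
      ultimately have "(p,B,q,c) \<in> QS F \<times> V \<times> QS F \<times> {c. set c \<subseteq> QS F \<times> V \<times> QS F \<and> length c \<le> m}"
        using b(4,6) by auto
      moreover have "r = f2 (p,B,q,c)" unfolding f2_def r using b(1,2) by simp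
      ultimately show ?thesis unfolding D_def by blast
    next
      case (c X p)
      then have "r = f3 (X,p)" unfolding f3_def r by simp
      moreover have "(X,p) \<in> T \<times> QS F" using c by simp
      ultimately show ?thesis unfolding D_def by blast
    next
      case (d X p)
      then have "r = f4 (X,p)" unfolding f4_def r by simp
      moreover have "(X,p) \<in> V \<times> QS F" using d by simp
      ultimately show ?thesis unfolding D_def by blast
    qed
  qed
  ultimately have finP: "finite (newP V T P S W F)" by (rule finite_subset[rotated])
  have finV: "finite (newV V T F)" unfolding newV_def using fQ fV fT by simp
  have rules: "\<forall>(A, w)\<in>newP V T P S W F. A \<in> newV V T F - Inl ` T \<and> set w \<subseteq> newV V T F"
  proof (clarify)
    fix A w assume "(A, w) \<in> newP V T P S W F"
    then show "A \<in> newV V T F - Inl ` T \<and> set w \<subseteq> newV V T F"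
    proof (cases rule: newP_cases)
      case (a q)
      then show ?thesis using fV(4) F_QS[of F] unfolding newV_def by auto
    next
      case (b p B q c)
      have "q \<in> QS F" using ischain_Q[OF b(5) b(4) b(6)] .
      moreover have "B \<in> V" using G b(3) unfolding cfg_def by auto
      ultimately show ?thesis using b unfolding newV_def by auto
    next
      case (c X p)
      then show ?thesis using stp_QS[of p F W X] fV unfolding newV_def by auto
    next
      case (d X p)
      then show ?thesis using stp_QS[of p F W X] fV unfolding newV_def by auto
    qed
  qed
  have TV: "Inl ` T \<subseteq> newV V T F" unfolding newV_def by blast
  have SV: "Inr None \<in> newV V T F - Inl ` T" unfolding newV_def by blast
  show ?thesis unfolding cfg_def using finV TV SV finP rules by blast
qed

lemma lang_new:
  assumes G: "cfg V T P S"
  shows "lang_cfg (newV V T F) (Inl ` T) (newP V T P S W F) (Inr None) = map Inl ` LGF V T P S W F"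
proof (intro set_eqI iffI)
  fix z assume "z \<in> lang_cfg (newV V T F) (Inl ` T) (newP V T P S W F) (Inr None)"
  then have d: "der (newP V T P S W F) [Inr None] z" and zT: "set z \<subseteq> Inl ` T"
    unfolding lang_cfg_def sforms_der by auto
  from der_ConsE[OF d] obtain w' u where r: "(Inr None, w') \<in> newP V T P S W F" "der (newP V T P S W F) w' u" "z = u"
  proof (elim disjE exE conjE)
    fix zs assume "z = Inr None # zs"
    then show thesis using zT by auto
  next
    fix w u v assume h: "(Inr None, w) \<in> newP V T P S W F" "der (newP V T P S W F) w u" "der (newP V T P S W F) [] v" "z = u @ v"
    then have "v = []" by (simp add: der_Nil_iff)
    then show thesis using that h by simp
  qed
  from r(1) obtain q where q: "w' = [NT (F,S,q)]" "[] \<in> q"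
    by (cases rule: newP_cases) auto
  have ch: "ischain F [(F,S,q)] q" by simp
  have dd: "der (newP V T P S W F) w' z" using r by simp
  have wq: "w' = map NT [(F,S,q)]" using q(1) by simp
  from sound[OF dd refl wq ch zT]
  obtain y where
    y: "der P (mids [(F,S,q)]) y" "\<forall>s\<in>set y. s \<in> T \<or> (s \<in> V - T \<and> s \<in> W)" "z = map Inl (proj T y)" "lq (proj W y) F = q"
    by blast
  have yS: "der P [S] y" using y(1) by (simp add: mids_def)
  have "proj W y \<in> F" using y(4) q(2) unfolding lq_def by auto
  moreover have "proj ((V - T) - W) y = []" using y(2) unfolding proj_def filter_empty_conv by auto
  moreover have "y \<in> sforms P S" using yS unfolding sforms_der by simp
  ultimately have "proj T y \<in> LGF V T P S W F" unfolding LGF_def phiF_def by blast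
  then show "z \<in> map Inl ` LGF V T P S W F" using y(3) by (rule rev_image_eqI)
next
  fix z :: "('a + 'a nt) list" assume "z \<in> map Inl ` LGF V T P S W F"
  then obtain y where y: "z = map Inl (proj T y)" "y \<in> sforms P S" "proj W y \<in> F" "proj ((V - T) - W) y = []"
    unfolding LGF_def phiF_def by blast
  have yd: "der P [S] y" using y(2) unfolding sforms_der by simp
  have SV: "S \<in> V" "\<forall>(A, w)\<in>P. set w \<subseteq> V" using G unfolding cfg_def by auto
  have yV: "set y \<subseteq> V" using der_V[OF yd] SV by simp
  have allowed: "\<forall>s\<in>set y. s \<in> T \<or> s \<in> W" using y(4) yV unfolding proj_def filter_empty_conv by auto
  have S1: "set [S] \<subseteq> V" using SV by simp
  from complete[OF yd S1 G allowed F_QS] obtain c where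
    c: "mids c = [S]" "ischain F c (lq (proj W y) F)" "\<forall>t\<in>set c. t \<in> QS F \<times> V \<times> QS F"
       "der (newP V T P S W F) (map NT c) (map Inl (proj T y))" by blast
  let ?q = "lq (proj W y) F"
  have cc: "c = [(F,S,?q)]"
  proof -
    from c(1) obtain t c' where tc: "c = t#c'" "(fst \<circ> snd) t = S" "map (fst \<circ> snd) c' = []"
      unfolding mids_def map_eq_Cons_conv by blast
    obtain a X b where t: "t = (a,X,b)" by (cases t)
    have "c' = []" using tc(3) by simp
    moreover have "X = S" using tc(2) t by simp
    moreover have "a = F" "b = ?q" using c(2) tc(1) t \<open>c' = []\<close> by simp_all
    ultimately show ?thesis using tc(1) t by simp
  qed
  have q1: "?q \<in> QS F" by (rule lq_QS[OF F_QS])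
  have q2: "[] \<in> ?q" using y(3) unfolding lq_def by simp
  have R: "(Inr None, [NT (F,S,?q)]) \<in> newP V T P S W F" using q1 q2 by (rule newP_R1)
  have "der (newP V T P S W F) [NT (F,S,?q)] (map Inl (proj T y))" using c(4) cc by simp
  from der.der_Rule[OF R this der.der_Nil]
  have "der (newP V T P S W F) [Inr None] z" using y(1) by simp
  moreover have "set z \<subseteq> Inl ` T" using y(1) unfolding proj_def by auto
  ultimately show "z \<in> lang_cfg (newV V T F) (Inl ` T) (newP V T P S W F) (Inr None)"
    unfolding lang_cfg_def sforms_der by simp
qed

definition rnP :: "('b \<Rightarrow> 'c) \<Rightarrow> ('b \<times> 'b list) set \<Rightarrow> ('c \<times> 'c list) set" where
  "rnP h P = (\<lambda>(A,w). (h A, map h w)) ` P"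

lemma der_map_fwd: "der P x y \<Longrightarrow> der (rnP h P) (map h x) (map h y)"
proof (induction rule: der.induct)
  case (der_Rule A w u xs v)
  have "(h A, map h w) \<in> rnP h P" using der_Rule(1) unfolding rnP_def by force
  from der.der_Rule[OF this der_Rule(4) der_Rule(5)] show ?case by simp
next
  case der_Nil then show ?case by (simp add: der.der_Nil)
next
  case (der_Keep xs zs X) then show ?case by (simp add: der.der_Keep)
qed

lemma der_map_bwd:
  assumes "der P' x' z"
  shows "P' = rnP h P \<Longrightarrow> x' = map h x \<Longrightarrow> set x \<subseteq> V \<Longrightarrow> cfg V T P S \<Longrightarrow> inj_on h V \<Longrightarrow> \<exists>y. z = map h y \<and> der P x y"
  using assms
proof (induction arbitrary: x rule: der.induct)
  case der_Nil
  then have "x = []" by simp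
  then show ?case by (intro exI[of _ "[]"]) (simp add: der.der_Nil)
next
  case (der_Keep xs zs X)
  then obtain Y x2 where x: "x = Y # x2" "X = h Y" "xs = map h x2" by (cases x) auto
  have "set x2 \<subseteq> V" using der_Keep.prems(3) x(1) by simp
  from der_Keep.IH[OF der_Keep.prems(1) x(3) this der_Keep.prems(4,5)] obtain y where "zs = map h y" "der P x2 y" by blast
  then show ?case using x by (intro exI[of _ "Y#y"]) (simp add: der.der_Keep)
next
  case (der_Rule A' w' u xs' v)
  then obtain A x2 where x: "x = A # x2" "A' = h A" "xs' = map h x2" by auto
  from der_Rule.hyps(1) der_Rule.prems(1) obtain B w where Bw: "(B,w) \<in> P" "A' = h B" "w' = map h w"
    unfolding rnP_def by auto
  have "B \<in> V" "set w \<subseteq> V" using Bw(1) der_Rule.prems(4) unfolding cfg_def by auto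
  moreover have "A \<in> V" using x der_Rule.prems(3) by auto
  ultimately have AB: "A = B" using der_Rule.prems(5) x(2) Bw(2) by (auto dest: inj_onD)
  from der_Rule.IH(1)[OF der_Rule.prems(1) Bw(3) \<open>set w \<subseteq> V\<close> der_Rule.prems(4,5)] obtain y1 where
    y1: "u = map h y1" "der P w y1" by blast
  from der_Rule.IH(2)[OF der_Rule.prems(1) x(3) _ der_Rule.prems(4,5)] der_Rule.prems(3) x obtain y2 where
    y2: "v = map h y2" "der P x2 y2" by auto
  show ?case using y1 y2 x AB Bw(1) by (auto intro!: exI[of _ "y1@y2"] der.der_Rule)
qed

lemma rename_CF:
  fixes V :: "'b set" and h :: "'b \<Rightarrow> 'a + nat" and e :: "'a \<Rightarrow> 'b"
  assumes G: "cfg V T P S" and inj: "inj_on h V" and L: "lang_cfg V T P S = map e ` L"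
    and he: "\<And>a. h (e a) = Inl a" and hT: "h ` T \<subseteq> range Inl"
  shows "L \<in> CF"
proof -
  have G': "finite V" "T \<subseteq> V" "S \<in> V - T" "finite P" "\<forall>(A, w)\<in>P. A \<in> V - T \<and> set w \<subseteq> V"
    using G unfolding cfg_def by auto
  have PV: "\<forall>(A, w)\<in>P. set w \<subseteq> V" using G'(5) by auto
  have cfgh: "cfg (h ` V) (h ` T) (rnP h P) (h S)"
    unfolding cfg_def rnP_def
  proof (intro conjI)
    have "h S \<notin> h ` T" using G'(2,3) inj by (simp add: inj_on_image_mem_iff)
    then show "h S \<in> h ` V - h ` T" using G'(3) by simp
    show "\<forall>(A, w)\<in>(\<lambda>(A, w). (h A, map h w)) ` P. A \<in> h ` V - h ` T \<and> set w \<subseteq> h ` V"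
    proof
      fix r assume "r \<in> (\<lambda>(A, w). (h A, map h w)) ` P"
      then obtain A w where r: "r = (h A, map h w)" "(A,w) \<in> P" by auto
      then have Aw: "A \<in> V" "A \<notin> T" "set w \<subseteq> V" using G'(5) by auto
      then have "h A \<notin> h ` T" using inj G'(2) by (simp add: inj_on_image_mem_iff)
      then have "h A \<in> h ` V - h ` T" using Aw(1) by simp
      moreover have "set (map h w) \<subseteq> h ` V" using Aw(3) by auto
      ultimately show "case r of (A', w') \<Rightarrow> A' \<in> h ` V - h ` T \<and> set w' \<subseteq> h ` V" using r(1) by simp
    qed
  qed (use G' in auto)
  have langh: "lang_cfg (h ` V) (h ` T) (rnP h P) (h S) = map h ` lang_cfg V T P S"
  proof (intro set_eqI iffI)
    fix z assume "z \<in> lang_cfg (h ` V) (h ` T) (rnP h P) (h S)"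
    then have d: "der (rnP h P) [h S] z" and zT: "set z \<subseteq> h ` T" unfolding lang_cfg_def sforms_der by auto
    have e1: "[h S] = map h [S]" by simp
    have e2: "set [S] \<subseteq> V" using G'(3) by simp
    from der_map_bwd[OF d refl e1 e2 G inj] obtain y where y: "z = map h y" "der P [S] y" by blast
    have yV: "set y \<subseteq> V" using der_V[OF y(2) e2 PV] .
    have yT: "set y \<subseteq> T"
    proof
      fix s assume "s \<in> set y"
      then have "h s \<in> h ` T" "s \<in> V" using zT y(1) yV by auto
      then show "s \<in> T" using inj G'(2) by (simp add: inj_on_image_mem_iff)
    qed
    have "y \<in> lang_cfg V T P S" using y(2) yT unfolding lang_cfg_def sforms_der by simp
    then show "z \<in> map h ` lang_cfg V T P S" using y(1) by (rule rev_image_eqI)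
  next
    fix z assume "z \<in> map h ` lang_cfg V T P S"
    then obtain y where y: "z = map h y" "y \<in> lang_cfg V T P S" by blast
    then have y2: "der P [S] y" "set y \<subseteq> T" unfolding lang_cfg_def sforms_der by auto
    have "der (rnP h P) [h S] z" using der_map_fwd[OF y2(1), of h] y(1) by simp
    moreover have "set z \<subseteq> h ` T" using y(1) y2(2) by auto
    ultimately show "z \<in> lang_cfg (h ` V) (h ` T) (rnP h P) (h S)"
      unfolding lang_cfg_def sforms_der by simp
  qed
  have "map h ` lang_cfg V T P S = map Inl ` L"
    unfolding L image_image by (simp add: comp_def he)
  then have "lang_cfg (h ` V) (h ` T) (rnP h P) (h S) = map Inl ` L" using langh by simp
  then show ?thesis unfolding CF_def using cfgh hT by blast
qed

lemma sforms_V: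
  assumes G: "cfg V T P S" and y: "y \<in> sforms P S"
  shows "set y \<subseteq> V"
proof -
  have PV: "\<forall>(A, w)\<in>P. set w \<subseteq> V" and SV: "set [S] \<subseteq> V" using G unfolding cfg_def by auto
  have d: "der P [S] y" using y unfolding sforms_der by simp
  show ?thesis using der_V[OF d SV PV] .
qed

lemma CF_sub: "CF \<subseteq> CF_REG"
proof
  fix L :: "'a list set" assume "L \<in> CF"
  then have "\<exists>(V :: ('a + nat) set) T P S. cfg V T P S \<and> T \<subseteq> range Inl \<and> lang_cfg V T P S = map Inl ` L"
    unfolding CF_def by simp
  then obtain V :: "('a + nat) set" and T P S where G0: "cfg V T P S \<and> T \<subseteq> range Inl \<and> lang_cfg V T P S = map Inl ` L"
    by (elim exE) (erule that)
  then have G: "cfg V T P S" "T \<subseteq> range Inl" "lang_cfg V T P S = map Inl ` L" by simp_all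
  have "LGF V T P S {} {[]} = lang_cfg V T P S"
  proof (intro set_eqI iffI)
    fix z assume "z \<in> LGF V T P S {} {[]}"
    then obtain y where y: "z = proj T y" "y \<in> sforms P S" "proj (V - T) y = []"
      unfolding LGF_def phiF_def by auto
    have "set y \<subseteq> V" using sforms_V[OF G(1) y(2)] .
    then have "set y \<subseteq> T" using y(3) unfolding proj_def filter_empty_conv by auto
    then have "z = y" using y(1) unfolding proj_def by (simp add: subset_code(1))
    then show "z \<in> lang_cfg V T P S" using y(2) \<open>set y \<subseteq> T\<close> unfolding lang_cfg_def by auto
  next
    fix z assume "z \<in> lang_cfg V T P S"
    then have z: "z \<in> sforms P S" "set z \<subseteq> T" unfolding lang_cfg_def by auto
    then have "proj T z = z" "proj {} z = []" "proj (V - T - {}) z = []" unfolding proj_def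
      by (auto simp: filter_id_conv filter_empty_conv)
    then show "z \<in> LGF V T P S {} {[]}" using z unfolding LGF_def phiF_def by force
  qed
  moreover have "regular_over {} {[]}" unfolding regular_over_def by (intro exI[of _ One]) auto
  ultimately have "cfg V T P S \<and> T \<subseteq> range Inl \<and> {} \<subseteq> V \<and> regular_over {} {[]} \<and> LGF V T P S {} {[]} = map Inl ` L"
    using G by simp
  then show "L \<in> CF_REG" unfolding CF_REG_def by (intro CollectI exI) assumption
qed

lemma REG_sub: "CF_REG \<subseteq> CF"
proof
  fix L :: "'a list set" assume "L \<in> CF_REG"
  then have "\<exists>(V :: ('a + nat) set) T P S W F. cfg V T P S \<and> T \<subseteq> range Inl \<and>
             W \<subseteq> V \<and> regular_over W F \<and> LGF V T P S W F = map Inl ` L"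
    unfolding CF_REG_def by simp
  then obtain V :: "('a + nat) set" and T P S W F where G0: "cfg V T P S \<and> T \<subseteq> range Inl \<and>
             W \<subseteq> V \<and> regular_over W F \<and> LGF V T P S W F = map Inl ` L"
    by (elim exE) (erule that)
  then have G: "cfg V T P S" "T \<subseteq> range Inl" "regular_over W F" "LGF V T P S W F = map Inl ` L" by simp_all
  obtain r where "atoms r \<subseteq> W \<and> rlang r = F" using G(3) unfolding regular_over_def by (elim exE) (erule that)
  then have "rlang r = F" by simp
  then have fQ: "finite (QS F)" unfolding QS_def using finite_lq[of r] by simp
  let ?V = "newV V T F"
  have fV: "finite ?V" using cfg_new[OF G(1) fQ, of W] unfolding cfg_def by auto
  obtain enc :: "('a + nat) + ('a + nat) nt \<Rightarrow> nat" where enc: "inj_on enc ?V"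
    using finite_imp_inj_to_nat_seg[OF fV] by blast
  define h :: "('a + nat) + ('a + nat) nt \<Rightarrow> 'a + nat" where
    "h x = (case x of Inl (Inl a) \<Rightarrow> Inl a | _ \<Rightarrow> Inr (enc x))" for x
  have inj: "inj_on h ?V"
    using enc unfolding inj_on_def h_def by (auto split: sum.splits)
  have lang: "lang_cfg ?V (Inl ` T) (newP V T P S W F) (Inr None) = map (Inl \<circ> Inl) ` L"
    using lang_new[OF G(1), of F W] G(4) by (simp add: image_image)
  have hT: "h ` Inl ` T \<subseteq> range Inl" using G(2) unfolding h_def by auto
  show "L \<in> CF"
    by (rule rename_CF[OF cfg_new[OF G(1) fQ] inj lang _ hT]) (simp add: h_def)
qed

theorem theorem1:
  shows "(CF_REG :: 'a list set set) = CF"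
  using CF_sub REG_sub by blast

end
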